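(* Let $\Phi$ be a convex growth function and $\alpha>-1$. Then for any $z=x+iy\in \mathbb{C}_+$, the function $$f_z(w):=\Phi^{-1}\left(\frac 1{y^{2+\alpha}}\right)\frac{y^{4+2\alpha}}{(w-\bar{z})^{4+2\alpha}},\quad w\in\mathbb{C}_+,$$ belongs to $A_\alpha^\Phi(\mathbb{C}_+)$. Moreover, $$\int_{\mathbb{C}_+}\Phi(|f_z(w)|)dV_\alpha(w)\le B\left(\tfrac{1}{2}, \tfrac{3+2\alpha}{2}\right)B(1+\alpha, 2+\alpha).$$
   Context: $\mathbb{C}_+=\{x+iy: y>0\}$. A growth function is a continuous nondecreasing function from $[0,\infty)$ onto $[0,\infty)$; $\Phi^{-1}$ is its inverse. $dV_\alpha(x+iy)=y^\alpha dxdy$; $A^\Phi_\alpha(\mathbb{C}_+)$ is the space of holomorphic $f$ on $\mathbb{C}_+$ with $\int\Phi(|f|)dV_\alpha<\infty$. $B(m,n)=\int_0^\infty\frac{u^{m-1}}{(1+u)^{m+n}}du$ is the beta function; $(w-\bar z)^{4+2\alpha}$ is defined with the principal branch (note $w-\bar z$ lies in the upper half-plane). *)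

theory Defs
  imports "HOL-Complex_Analysis.Complex_Analysis"
begin

definition upper_half_plane :: "complex set" where
  "upper_half_plane = {w. 0 < Im w}"

definition growth_function :: "(real \<Rightarrow> real) \<Rightarrow> bool" where
  "growth_function \<Phi> \<longleftrightarrow> continuous_on {0..} \<Phi> \<and> mono_on {0..} \<Phi> \<and> \<Phi> ` {0..} = {0..}"

definition growth_inv :: "(real \<Rightarrow> real) \<Rightarrow> real \<Rightarrow> real" where
  "growth_inv \<Phi> t = inv_into {0..} \<Phi> t"

definition orlicz_modular :: "(real \<Rightarrow> real) \<Rightarrow> real \<Rightarrow> (complex \<Rightarrow> complex) \<Rightarrow> ennreal" where
  "orlicz_modular \<Phi> \<alpha> f =
     (\<integral>\<^sup>+ w. indicator upper_half_plane w * ennreal (\<Phi> (cmod (f w)) * Im w powr \<alpha>) \<partial>lborel)"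

definition bergman_orlicz :: "(real \<Rightarrow> real) \<Rightarrow> real \<Rightarrow> (complex \<Rightarrow> complex) set" where
  "bergman_orlicz \<Phi> \<alpha> =
     {f. f holomorphic_on upper_half_plane \<and> orlicz_modular \<Phi> \<alpha> f < \<infinity>}"

end

theory Submission
  imports Defs
begin

lemma lborel_complex_pair:
  "distr (lborel \<Otimes>\<^sub>M lborel) borel (\<lambda>p. Complex (fst p) (snd p)) = (lborel :: complex measure)"
proof (rule lborel_eqI[symmetric])
  fix l u :: complex
  assume le: "\<And>b. b \<in> Basis \<Longrightarrow> l \<bullet> b \<le> u \<bullet> b"
  have m: "(\<lambda>p. Complex (fst p) (snd p)) \<in> borel_measurable (lborel \<Otimes>\<^sub>M lborel)"
    unfolding Complex_eq by measurable
  have "(\<lambda>p. Complex (fst p) (snd p)) -` box l u \<inter> space (lborel \<Otimes>\<^sub>M lborel) = {Re l<..<Re u} \<times> {Im l<..<Im u}"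
    by (auto simp: box_def Basis_complex_def space_pair_measure)
  moreover have "Re l \<le> Re u" "Im l \<le> Im u" using le[of 1] le[of \<i>] by (auto simp: Basis_complex_def)
  ultimately show "emeasure (distr (lborel \<Otimes>\<^sub>M lborel) borel (\<lambda>p. Complex (fst p) (snd p))) (box l u) = (\<Prod>b\<in>Basis. (u - l) \<bullet> b)"
    using m by (simp add: emeasure_distr lborel.emeasure_pair_measure_Times Basis_complex_def ennreal_mult)
qed simp

lemma beta_halfline:
  fixes a b y :: real assumes a: "a>0" and b: "b>0" and y: "y>0"
  shows "((\<lambda>v. v powr (a-1) * (v+y) powr (-(a+b))) has_integral (y powr (-b) * Beta a b)) {0<..}"
proof -
  define F where "F = (\<lambda>v::real. v powr (a-1) * (v+y) powr (-(a+b)))"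
  define g where "g = (\<lambda>t::real. y*t/(1-t))"
  define g' where "g' = (\<lambda>t::real. y/(1-t)^2)"
  define S where "S = {0<..<(1::real)}"
  have S: "S \<in> sets lebesgue" by (simp add: S_def)
  have der: "(g has_field_derivative g' t) (at t within S)" if "t \<in> S" for t
    using that unfolding g_def g'_def S_def
    by (auto intro!: derivative_eq_intros simp: field_simps power2_eq_square)
  have inj: "inj_on g S"
  proof (rule inj_onI)
    fix s t assume "s \<in> S" "t \<in> S" "g s = g t"
    then show "s = t" using y unfolding g_def S_def by (auto simp: field_simps)
  qed
  have img: "g ` S = {0<..}"
  proof
    show "g ` S \<subseteq> {0<..}" using y by (auto simp: g_def S_def)
    show "{0<..} \<subseteq> g ` S"
    proof
      fix v :: real assume "v \<in> {0<..}"
      hence v: "v > 0" by simp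
      have "1 - v/(v+y) = y/(v+y)" using v y by (simp add: field_simps)
      hence "g (v/(v+y)) = v" using v y by (simp add: g_def)
      moreover have "v/(v+y) \<in> S" using v y by (simp add: S_def field_simps)
      ultimately show "v \<in> g ` S" by (metis image_eqI)
    qed
  qed
  have beta: "((\<lambda>t. t powr (a-1) * (1-t) powr (b-1)) has_integral Beta a b) S"
    using has_integral_Beta_real[OF a b] by (simp add: S_def has_integral_Icc_iff_Ioo)
  have eq: "\<bar>g' t\<bar> * F (g t) = y powr (-b) * (t powr (a-1) * (1-t) powr (b-1))" if "t \<in> S" for t
  proof -
    have t: "0 < t" "t < 1" using that by (auto simp: S_def)
    have gt: "g t > 0" using t y by (simp add: g_def)
    have e1: "g t + y = y/(1-t)" using t by (simp add: g_def field_simps)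
    have e0: "exp (2 * ln (1-t)) = (1-t)^2"
    proof -
      have "2 * ln (1-t) = ln (1-t) + ln (1-t)" by simp
      hence "exp (2 * ln (1-t)) = exp (ln (1-t)) * exp (ln (1-t))" by (simp only: exp_add)
      then show ?thesis using t by (simp add: power2_eq_square)
    qed
    have e2: "\<bar>g' t\<bar> = exp (ln y - 2 * ln (1-t))" using t y
      unfolding exp_diff e0 by (simp add: g'_def)
    have l1: "ln (g t) = ln y + ln t - ln (1-t)" using t y unfolding g_def
      by (simp add: ln_div ln_mult)
    have l2: "ln (g t + y) = ln y - ln (1-t)" using t y unfolding e1
      by (simp add: ln_div)
    have "\<bar>g' t\<bar> * F (g t) = exp (ln y - 2 * ln (1-t)) * exp ((a-1) * (ln y + ln t - ln (1-t))) * exp (-(a+b) * (ln y - ln (1-t)))"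
      unfolding e2 F_def powr_def l1[symmetric] l2[symmetric] using gt y
      by (simp add: mult.assoc)
    also have "\<dots> = exp ((-b) * ln y) * (exp ((a-1) * ln t) * exp ((b-1) * ln (1-t)))"
      unfolding mult_exp_exp by (simp add: algebra_simps)
    also have "\<dots> = y powr (-b) * (t powr (a-1) * (1-t) powr (b-1))"
      using t y by (simp add: powr_def)
    finally show ?thesis .
  qed
  have h1: "((\<lambda>t. \<bar>g' t\<bar> * F (g t)) has_integral (y powr (-b) * Beta a b)) S"
    by (rule has_integral_eq[OF _ has_integral_mult_right[OF beta, of "y powr (-b)"]]) (simp add: eq)
  have nn1: "0 \<le> \<bar>g' t\<bar> * F (g t)" if "t \<in> S" for t
    using that y by (auto simp: F_def g_def S_def)
  have ai: "(\<lambda>t. \<bar>g' t\<bar> * F (g t)) absolutely_integrable_on S"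
    using h1 nn1 by (subst absolutely_integrable_on_iff_nonneg) (auto simp: has_integral_integrable)
  have "F absolutely_integrable_on (g ` S) \<and> integral (g ` S) F = y powr (-b) * Beta a b"
    using has_absolute_integral_change_of_variables_1'[OF S der inj, of F "y powr (-b) * Beta a b"] ai h1
    by (simp add: integral_unique)
  then show ?thesis unfolding img F_def
    by (metis integrable_integral set_lebesgue_integral_eq_integral(1))
qed

lemma quad_halfline:
  fixes c s :: real assumes c: "c>0" and s: "s>1/2"
  shows "((\<lambda>r. (r^2 + c^2) powr (-s)) has_integral (c powr (1 - 2 * s) * Beta (1/2) (s-1/2) / 2)) {0<..}"
proof -
  define F where "F = (\<lambda>r::real. (r^2 + c^2) powr (-s))"
  define g' where "g' = (\<lambda>v::real. inverse (sqrt v) / 2)"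
  define S where "S = {0::real<..}"
  have S: "S \<in> sets lebesgue" by (simp add: S_def)
  have der: "(sqrt has_field_derivative g' t) (at t within S)" if "t \<in> S" for t
    unfolding g'_def by (rule has_field_derivative_at_within[OF DERIV_real_sqrt]) (use that in \<open>simp add: S_def\<close>)
  have inj: "inj_on sqrt S" by (simp add: inj_on_def)
  have img: "sqrt ` S = {0<..}"
  proof
    show "sqrt ` S \<subseteq> {0<..}" by (auto simp: S_def)
    show "{0<..} \<subseteq> sqrt ` S"
    proof
      fix v :: real assume "v \<in> {0<..}"
      hence "v = sqrt (v^2)" "v^2 \<in> S" by (auto simp: S_def)
      thus "v \<in> sqrt ` S" by (metis image_eqI)
    qed
  qed
  have cc: "(c^2) powr (- (s - 1/2)) = c powr (1 - 2 * s)"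
  proof -
    have "c^2 = c powr 2" using c by (simp add: powr_numeral)
    hence "(c^2) powr (- (s - 1/2)) = c powr (2 * (- (s - 1/2)))" by (simp only: powr_powr)
    also have "2 * (- (s - 1/2)) = 1 - 2 * s" by simp
    finally show ?thesis .
  qed
  have beta: "((\<lambda>v. v powr (1/2-1) * (v+c^2) powr (-(1/2+(s-1/2)))) has_integral
       ((c^2) powr (-(s-1/2)) * Beta (1/2) (s-1/2))) S"
    unfolding S_def using c s by (intro beta_halfline) auto
  have eq: "\<bar>g' t\<bar> * F (sqrt t) = 1/2 * (t powr (1/2-1) * (t+c^2) powr (-(1/2+(s-1/2))))" if "t \<in> S" for t
  proof -
    have t: "t > 0" using that by (simp add: S_def)
    have e: "(1/2-1::real) = -(1/2)" by simp
    have "t powr (1/2-1) = t powr (-(1/2))" by (simp only: e)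
    also have "\<dots> = inverse (sqrt t)" using t by (simp add: powr_minus powr_half_sqrt)
    finally have "t powr (1/2-1) = inverse (sqrt t)" .
    thus ?thesis using t by (simp add: g'_def F_def)
  qed
  have h1: "((\<lambda>t. \<bar>g' t\<bar> * F (sqrt t)) has_integral (c powr (1 - 2 * s) * Beta (1/2) (s-1/2) / 2)) S"
  proof -
    have h0: "((\<lambda>t. \<bar>g' t\<bar> * F (sqrt t)) has_integral (1/2 * ((c^2) powr (- (s - 1/2)) * Beta (1/2) (s-1/2)))) S"
      by (rule has_integral_eq[OF _ has_integral_mult_right[OF beta]]) (simp add: eq)
    have val: "1/2 * ((c^2) powr (- (s - 1/2)) * Beta (1/2) (s-1/2)) = c powr (1 - 2 * s) * Beta (1/2) (s-1/2) / 2"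
      unfolding cc[symmetric] by simp
    show ?thesis using h0 unfolding val .
  qed
  have nn1: "0 \<le> \<bar>g' t\<bar> * F (sqrt t)" if "t \<in> S" for t
    by (auto simp: F_def)
  have ai: "(\<lambda>t. \<bar>g' t\<bar> * F (sqrt t)) absolutely_integrable_on S"
    using h1 nn1 by (subst absolutely_integrable_on_iff_nonneg) (auto simp: has_integral_integrable)
  have "F absolutely_integrable_on (sqrt ` S) \<and> integral (sqrt ` S) F = c powr (1 - 2 * s) * Beta (1/2) (s-1/2) / 2"
    using has_absolute_integral_change_of_variables_1'[OF S der inj, of F "c powr (1 - 2 * s) * Beta (1/2) (s-1/2) / 2"] ai h1
    by (simp add: integral_unique)
  then show ?thesis unfolding img F_def
    by (metis integrable_integral set_lebesgue_integral_eq_integral(1))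
qed

lemma Beta_pos_real: "a > 0 \<Longrightarrow> b > 0 \<Longrightarrow> Beta a b > (0::real)"
  by (simp add: Beta_def Gamma_real_pos)

lemma quad_line:
  fixes c s x :: real assumes c: "c>0" and s: "s>1/2"
  shows "(\<integral>\<^sup>+u. ennreal (((u - x)^2 + c^2) powr (-s)) \<partial>lborel) = ennreal (c powr (1 - 2 * s) * Beta (1/2) (s-1/2))"
proof -
  define F where "F = (\<lambda>r::real. (r^2 + c^2) powr (-s))"
  define V where "V = c powr (1 - 2 * s) * Beta (1/2) (s-1/2)"
  have V: "V \<ge> 0" unfolding V_def using s c by (intro mult_nonneg_nonneg less_imp_le Beta_pos_real) auto
  have Fm[measurable]: "F \<in> borel_measurable borel" unfolding F_def by measurable
  have hp: "(\<integral>\<^sup>+r. ennreal (F r) * indicator {0<..} r \<partial>lborel) = ennreal (V/2)"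
    unfolding V_def F_def by (rule nn_integral_has_integral_lebesgue'[OF _ quad_halfline[OF c s]]) simp
  have hn: "(\<integral>\<^sup>+r. ennreal (F r) * indicator {..<0} r \<partial>lborel) = ennreal (V/2)"
  proof -
    have "(\<integral>\<^sup>+r. ennreal (F r) * indicator {..<0} r \<partial>lborel)
        = (\<integral>\<^sup>+r. ennreal (F r) * indicator {..<0} r \<partial>(distr lborel borel uminus))"
      by (simp add: lborel_distr_uminus)
    also have "\<dots> = (\<integral>\<^sup>+r. ennreal (F (-r)) * indicator {..<0} (-r) \<partial>lborel)"
      by (subst nn_integral_distr) auto
    also have "\<dots> = (\<integral>\<^sup>+r. ennreal (F r) * indicator {0<..} r \<partial>lborel)"
      by (intro nn_integral_cong) (auto simp: F_def indicator_def)
    finally show ?thesis using hp by simp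
  qed
  have "(\<integral>\<^sup>+u. ennreal (F u) \<partial>lborel) = (\<integral>\<^sup>+u. ennreal (F u) * indicator {0<..} u + ennreal (F u) * indicator {..<0} u \<partial>lborel)"
    by (intro nn_integral_cong_AE eventually_mono[OF AE_lborel_singleton[of 0]]) (auto simp: indicator_def)
  also have "\<dots> = ennreal (V/2) + ennreal (V/2)"
    by (subst nn_integral_add) (auto simp: hp hn)
  also have "\<dots> = ennreal V" using V by (simp add: ennreal_plus[symmetric] del: ennreal_plus)
  finally have full: "(\<integral>\<^sup>+u. ennreal (F u) \<partial>lborel) = ennreal V" .
  have "(\<integral>\<^sup>+u. ennreal (F u) \<partial>lborel) = (\<integral>\<^sup>+u. ennreal (F u) \<partial>(distr lborel borel ((+) (-x))))"
    by (simp add: lborel_distr_plus)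
  also have "\<dots> = (\<integral>\<^sup>+u. ennreal (F (-x + u)) \<partial>lborel)"
    by (subst nn_integral_distr) auto
  finally show ?thesis using full unfolding F_def V_def by simp
qed

lemma main_integral:
  fixes x y \<alpha> :: real assumes y: "y>0" and al: "\<alpha> > -1"
  shows "(\<integral>\<^sup>+w. indicator upper_half_plane w * ennreal (y powr (2+\<alpha>) * Im w powr \<alpha> * ((Re w - x)^2 + (Im w + y)^2) powr (-(2+\<alpha>))) \<partial>lborel)
         = ennreal (Beta (1/2) ((3 + 2 * \<alpha>) / 2) * Beta (1 + \<alpha>) (2 + \<alpha>))"
proof -
  define s where "s = 2 + \<alpha>"
  define B1 where "B1 = Beta (1/2) (s - 1/2)"
  define B2 where "B2 = Beta (1 + \<alpha>) (2 + \<alpha>)"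
  have s: "s > 1/2" using al by (simp add: s_def)
  have B1: "B1 > 0" unfolding B1_def using s by (intro Beta_pos_real) auto
  define H where "H = (\<lambda>w::complex. indicator upper_half_plane w * ennreal (y powr s * Im w powr \<alpha> * ((Re w - x)^2 + (Im w + y)^2) powr (-s)))"
  have Hm[measurable]: "H \<in> borel_measurable borel"
    unfolding H_def upper_half_plane_def by measurable
  have Cm[measurable]: "(\<lambda>p. Complex (fst p) (snd p)) \<in> borel_measurable (lborel \<Otimes>\<^sub>M lborel)"
    unfolding Complex_eq by measurable
  have "(\<integral>\<^sup>+w. H w \<partial>lborel) = (\<integral>\<^sup>+w. H w \<partial>(distr (lborel \<Otimes>\<^sub>M lborel) borel (\<lambda>p. Complex (fst p) (snd p))))"
    by (simp add: lborel_complex_pair)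
  also have "\<dots> = (\<integral>\<^sup>+p. H (Complex (fst p) (snd p)) \<partial>(lborel \<Otimes>\<^sub>M lborel))"
    by (subst nn_integral_distr) auto
  also have "\<dots> = (\<integral>\<^sup>+v. \<integral>\<^sup>+u. H (Complex u v) \<partial>lborel \<partial>lborel)"
    by (subst lborel_pair.nn_integral_snd[symmetric]) auto
  also have "\<dots> = (\<integral>\<^sup>+v. ennreal (y powr s * B1) * (ennreal (v powr ((1+\<alpha>) - 1) * (v + y) powr (-((1+\<alpha>) + (2+\<alpha>)))) * indicator {0<..} v) \<partial>lborel)"
  proof (intro nn_integral_cong)
    fix v :: real
    show "(\<integral>\<^sup>+u. H (Complex u v) \<partial>lborel) = ennreal (y powr s * B1) * (ennreal (v powr ((1+\<alpha>) - 1) * (v + y) powr (-((1+\<alpha>) + (2+\<alpha>)))) * indicator {0<..} v)"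
    proof (cases "v > 0")
      case False
      then show ?thesis by (simp add: H_def upper_half_plane_def indicator_def)
    next
      case True
      have "(\<integral>\<^sup>+u. H (Complex u v) \<partial>lborel) = (\<integral>\<^sup>+u. ennreal (y powr s * v powr \<alpha>) * ennreal (((u - x)^2 + (v + y)^2) powr (-s)) \<partial>lborel)"
        using True y by (intro nn_integral_cong) (simp add: H_def upper_half_plane_def ennreal_mult'[symmetric] mult.assoc)
      also have "\<dots> = ennreal (y powr s * v powr \<alpha>) * ennreal ((v + y) powr (1 - 2 * s) * B1)"
        using True y s by (subst nn_integral_cmult) (simp_all add: quad_line B1_def)
      also have "\<dots> = ennreal (y powr s * B1) * (ennreal (v powr ((1+\<alpha>) - 1) * (v + y) powr (-((1+\<alpha>) + (2+\<alpha>)))) * indicator {0<..} v)"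
        using True y B1 by (simp add: s_def ennreal_mult'[symmetric] algebra_simps)
      finally show ?thesis .
    qed
  qed
  also have "\<dots> = ennreal (y powr s * B1) * ennreal (y powr (-(2+\<alpha>)) * B2)"
  proof -
    have hb: "(\<integral>\<^sup>+v. ennreal (v powr ((1+\<alpha>) - 1) * (v + y) powr (-((1+\<alpha>) + (2+\<alpha>)))) * indicator {0<..} v \<partial>lborel) = ennreal (y powr (-(2+\<alpha>)) * B2)"
      unfolding B2_def by (rule nn_integral_has_integral_lebesgue'[OF _ beta_halfline]) (use y al in auto)
    show ?thesis by (subst nn_integral_cmult) (simp_all only: hb, measurable)
  qed
  also have "\<dots> = ennreal (B1 * B2)"
  proof -
    have yy: "y powr s * y powr (-(2+\<alpha>)) = 1" using y by (simp add: s_def flip: powr_add)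
    have B2: "B2 > 0" unfolding B2_def using al by (intro Beta_pos_real) auto
    have "ennreal (y powr s * B1) * ennreal (y powr (-(2+\<alpha>)) * B2) = ennreal ((y powr s * B1) * (y powr (-(2+\<alpha>)) * B2))"
      using B1 B2 by (simp add: ennreal_mult)
    also have "(y powr s * B1) * (y powr (-(2+\<alpha>)) * B2) = (y powr s * y powr (-(2+\<alpha>))) * (B1 * B2)"
      by (simp only: ac_simps)
    finally show ?thesis by (simp only: yy mult_1)
  qed
  finally show ?thesis unfolding H_def B1_def B2_def s_def by (simp add: field_simps)
qed

theorem lemma3p14:
  fixes \<Phi> :: "real \<Rightarrow> real" and \<alpha> :: real and z :: complex
  assumes "growth_function \<Phi>" and "convex_on {0..} \<Phi>" and "\<alpha> > -1" and "0 < Im z"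
  defines "f \<equiv> (\<lambda>w. complex_of_real (growth_inv \<Phi> (1 / Im z powr (2 + \<alpha>)) * Im z powr (4 + 2 * \<alpha>))
                     / (w - cnj z) powr complex_of_real (4 + 2 * \<alpha>))"
  shows "f \<in> bergman_orlicz \<Phi> \<alpha> \<and>
         orlicz_modular \<Phi> \<alpha> f \<le> ennreal (Beta (1/2) ((3 + 2 * \<alpha>) / 2) * Beta (1 + \<alpha>) (2 + \<alpha>))"
proof -
  note gf = assms(1)[unfolded growth_function_def]
  note conv = assms(2)
  define y where "y = Im z"
  define x where "x = Re z"
  have y: "y > 0" using assms(4) by (simp add: y_def)
  define A where "A = growth_inv \<Phi> (1 / Im z powr (2 + \<alpha>))"
  have img: "\<Phi> ` {0..} = {0..}" using gf by blast
  have mono: "mono_on {0..} \<Phi>" using gf by blast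
  have "1 / Im z powr (2 + \<alpha>) \<in> \<Phi> ` {0..}" unfolding img using assms(4) by simp
  note mem = this
  have A0: "A \<ge> 0" using inv_into_into[OF mem] unfolding A_def growth_inv_def by simp
  have PhiA: "\<Phi> A = 1 / y powr (2 + \<alpha>)"
    using f_inv_into_f[OF mem] unfolding A_def growth_inv_def y_def by simp
  have Phi0: "\<Phi> 0 = 0"
  proof -
    have "(0::real) \<in> \<Phi> ` {0..}" unfolding img by simp
    then obtain a where a: "a \<ge> 0" "\<Phi> a = 0" by auto
    have "\<Phi> 0 \<le> \<Phi> a" using mono_onD[OF mono, of 0 a] a by simp
    moreover have "\<Phi> 0 \<in> {0..}" using img by blast
    ultimately show ?thesis using a by auto
  qed
  have Phi_scale: "\<Phi> (t * A) \<le> t * \<Phi> A" if "0 \<le> t" "t \<le> 1" for t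
    using convex_onD[OF conv, of t 0 A] that A0 by (simp add: Phi0)
  have bound: "\<Phi> (cmod (f w)) * Im w powr \<alpha> \<le> y powr (2+\<alpha>) * Im w powr \<alpha> * ((Re w - x)^2 + (Im w + y)^2) powr (-(2+\<alpha>))"
    if w: "w \<in> upper_half_plane" for w
  proof -
    have v: "Im w > 0" using w by (simp add: upper_half_plane_def)
    define d where "d = cmod (w - cnj z)"
    have d2: "d^2 = (Re w - x)^2 + (Im w + y)^2"
      unfolding d_def x_def y_def by (simp add: cmod_power2)
    have "Im w + y \<le> d" using abs_Im_le_cmod[of "w - cnj z"] v y unfolding d_def y_def by simp
    hence dy: "y \<le> d" "d > 0" using v y by auto
    have fw: "cmod (f w) = (y/d) powr (4 + 2 * \<alpha>) * A"
      unfolding f_def A_def[symmetric] using A0 y dy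
      by (simp add: norm_divide norm_powr_real_powr' d_def[symmetric] y_def[symmetric] powr_divide norm_mult)
    define t where "t = (y/d) powr (4 + 2 * \<alpha>)"
    have t01: "0 \<le> t" "t \<le> 1" unfolding t_def using dy y assms(3) by (auto intro: powr_le1)
    have "\<Phi> (cmod (f w)) \<le> t / y powr (2 + \<alpha>)"
      using Phi_scale[OF t01] unfolding fw t_def[symmetric] PhiA by simp
    also have "t / y powr (2 + \<alpha>) = y powr (2+\<alpha>) * ((Re w - x)^2 + (Im w + y)^2) powr (-(2+\<alpha>))"
    proof -
      have e1: "y powr (4 + 2 * \<alpha>) = y powr (2+\<alpha>) * y powr (2+\<alpha>)"
        by (simp flip: powr_add)
      have e2: "d powr (4 + 2 * \<alpha>) = (d^2) powr (2+\<alpha>)"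
      proof -
        have "d^2 = d powr 2" using dy by (simp add: powr_numeral)
        hence "(d^2) powr (2+\<alpha>) = d powr (2 * (2+\<alpha>))" by (simp only: powr_powr)
        thus ?thesis by simp
      qed
      have t': "t = y powr (4 + 2 * \<alpha>) / d powr (4 + 2 * \<alpha>)"
        unfolding t_def using y dy by (simp add: powr_divide)
      have Y: "y powr (2+\<alpha>) > 0" using y by simp
      have P: "(d^2) powr (2+\<alpha>) > 0" using dy by simp
      have "t / y powr (2 + \<alpha>) = y powr (2+\<alpha>) * y powr (2+\<alpha>) / (d^2) powr (2+\<alpha>) / y powr (2 + \<alpha>)"
        unfolding t' e1 e2 ..
      also have "\<dots> = y powr (2+\<alpha>) * inverse ((d^2) powr (2+\<alpha>))"
        using Y P by (simp add: field_simps)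
      also have "\<dots> = y powr (2+\<alpha>) * (d^2) powr (-(2+\<alpha>))"
        by (simp only: powr_minus)
      finally show ?thesis unfolding d2 .
    qed
    finally have "\<Phi> (cmod (f w)) \<le> y powr (2+\<alpha>) * ((Re w - x)^2 + (Im w + y)^2) powr (-(2+\<alpha>))" .
    from mult_right_mono[OF this, of "Im w powr \<alpha>"] show ?thesis by (simp add: mult_ac)
  qed
  have hol: "f holomorphic_on upper_half_plane"
  proof -
    have nr: "w - cnj z \<notin> \<real>\<^sub>\<le>\<^sub>0" if "w \<in> upper_half_plane" for w
    proof
      assume "w - cnj z \<in> \<real>\<^sub>\<le>\<^sub>0"
      hence "w - cnj z \<in> \<real>" by (rule nonpos_Reals_Real)
      hence "Im (w - cnj z) = 0" by (simp only: complex_is_Real_iff)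
      thus False using that assms(4) by (simp add: upper_half_plane_def)
    qed
    have nz: "(w - cnj z) powr complex_of_real (4 + 2 * \<alpha>) \<noteq> 0" if "w \<in> upper_half_plane" for w
      using nr[OF that] by (auto simp: powr_def)
    show ?thesis unfolding f_def
      by (intro holomorphic_intros nr nz) auto
  qed
  have "orlicz_modular \<Phi> \<alpha> f \<le> (\<integral>\<^sup>+w. indicator upper_half_plane w * ennreal (y powr (2+\<alpha>) * Im w powr \<alpha> * ((Re w - x)^2 + (Im w + y)^2) powr (-(2+\<alpha>))) \<partial>lborel)"
    unfolding orlicz_modular_def
  proof (intro nn_integral_mono)
    fix w show "indicator upper_half_plane w * ennreal (\<Phi> (cmod (f w)) * Im w powr \<alpha>)
       \<le> indicator upper_half_plane w * ennreal (y powr (2+\<alpha>) * Im w powr \<alpha> * ((Re w - x)^2 + (Im w + y)^2) powr (-(2+\<alpha>)))"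
      using bound[of w] by (cases "w \<in> upper_half_plane") (auto intro: ennreal_leI)
  qed
  also have "\<dots> = ennreal (Beta (1/2) ((3 + 2 * \<alpha>) / 2) * Beta (1 + \<alpha>) (2 + \<alpha>))"
    by (rule main_integral[OF y assms(3)])
  finally have le: "orlicz_modular \<Phi> \<alpha> f \<le> ennreal (Beta (1/2) ((3 + 2 * \<alpha>) / 2) * Beta (1 + \<alpha>) (2 + \<alpha>))" .
  hence "orlicz_modular \<Phi> \<alpha> f < \<infinity>" using le_less_trans by fastforce
  with hol le show ?thesis unfolding bergman_orlicz_def by simp
qed

end
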